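(* Consider the data-selling model described in the context, with network $G$, prior precision $z_0>0$ and cost $\gamma>0$. Let $C$ be a contract with common precision $z>0$ whose target set $M(C)$ is not an independent set of $G$. For $i\in M(C)$ let $m_i=|N_i\cap M(C)|$. If $$z>\min_{i\in M(C)}\frac{z_0}{1+m_i},$$ then $C$ is not an optimal contract for the seller.
   Context: Model. There is a finite set of buyers $N=\{1,\dots,n\}$ and an undirected network $G$ on $N$: for $i\neq j$, $g_{ij}=g_{ji}\in\{0,1\}$, with $g_{ij}=1$ iff $i$ and $j$ are linked. $N_i=\{j\neq i: g_{ij}=1\}$ is the set of neighbors of $i$. A state $\theta\sim N(0,1/z_0)$ with $z_0>0$ is unknown to all. A contract $C$ of the seller consists of a target set $M(C)\subseteq N$, a common precision $z>0$, and prices $p_i\ge 0$ for $i\in M(C)$ (buyers outside $M(C)$ get nothing and pay nothing). Each $i\in M(C)$ receives a signal $s_i=\theta+\varepsilon_i$, with $\varepsilon_i\sim N(0,1/z)$ independent of $\theta$ and of each other. Each buyer observes the signals of his neighbors in $M(C)$ (and his own if he is in $M(C)$) and then chooses $a_i$ to maximize $E[-(a_i-\theta)^2]$. With $m_i=|N_i\cap M(C)|$, buyer $i\in M(C)$ gets expected payoff $-\frac{1}{z_0+(m_i+1)z}-p_i$. Buyer $i\in M(C)$ accepts iff $p_i\le \frac{1}{z_0+m_iz}-\frac{1}{z_0+(m_i+1)z}$. A contract is feasible if every $i\in M(C)$ accepts. The seller's profit is $\pi(C)=\sum_{i\in M(C)}p_i-\gamma z$ with $\gamma>0$. An optimal contract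 is a feasible contract maximizing $\pi$. An independent set of $G$ is a set of nodes no two of which are linked. *)

theory Defs
  imports Complex_Main
begin

text \<open>Buyers form a finite set N; the network is a symmetric irreflexive
 relation G on N.  A contract is a triple (M, z, p): target set M, common
 precision z, prices p (only values on M matter).\<close>

definition nbrs :: "'a set \<Rightarrow> ('a \<Rightarrow> 'a \<Rightarrow> bool) \<Rightarrow> 'a \<Rightarrow> 'a set" where
  "nbrs N G i = {j \<in> N. j \<noteq> i \<and> G i j}"

definition mcnt :: "'a set \<Rightarrow> ('a \<Rightarrow> 'a \<Rightarrow> bool) \<Rightarrow> 'a set \<Rightarrow> 'a \<Rightarrow> nat" where
  "mcnt N G M i = card (nbrs N G i \<inter> M)"

definition is_contract :: "'a set \<Rightarrow> 'a set \<Rightarrow> real \<Rightarrow> ('a \<Rightarrow> real) \<Rightarrow> bool" where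
  "is_contract N M z p \<longleftrightarrow> M \<subseteq> N \<and> z > 0 \<and> (\<forall>i\<in>M. p i \<ge> 0)"

definition feasible :: "real \<Rightarrow> 'a set \<Rightarrow> ('a \<Rightarrow> 'a \<Rightarrow> bool) \<Rightarrow> 'a set \<Rightarrow> real \<Rightarrow> ('a \<Rightarrow> real) \<Rightarrow> bool" where
  "feasible z0 N G M z p \<longleftrightarrow> is_contract N M z p \<and>
     (\<forall>i\<in>M. p i \<le> 1 / (z0 + real (mcnt N G M i) * z) - 1 / (z0 + (real (mcnt N G M i) + 1) * z))"

definition profit :: "real \<Rightarrow> 'a set \<Rightarrow> real \<Rightarrow> ('a \<Rightarrow> real) \<Rightarrow> real" where
  "profit \<gamma> M z p = (\<Sum>i\<in>M. p i) - \<gamma> * z"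

definition optimal :: "real \<Rightarrow> real \<Rightarrow> 'a set \<Rightarrow> ('a \<Rightarrow> 'a \<Rightarrow> bool) \<Rightarrow> 'a set \<Rightarrow> real \<Rightarrow> ('a \<Rightarrow> real) \<Rightarrow> bool" where
  "optimal z0 \<gamma> N G M z p \<longleftrightarrow> feasible z0 N G M z p \<and>
     (\<forall>M' z' p'. feasible z0 N G M' z' p' \<longrightarrow> profit \<gamma> M' z' p' \<le> profit \<gamma> M z p)"

definition independent_set :: "('a \<Rightarrow> 'a \<Rightarrow> bool) \<Rightarrow> 'a set \<Rightarrow> bool" where
  "independent_set G S \<longleftrightarrow> (\<forall>i\<in>S. \<forall>j\<in>S. \<not> G i j)"

end

theory Submission
  imports Defs
begin

definition FF :: "real \<Rightarrow> real \<Rightarrow> real \<Rightarrow> real" where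
 "FF z0 z m = 1 / (z0 + m * z) - 1 / (z0 + (m + 1) * z)"

lemma FF_nonneg: "z0 > 0 \<Longrightarrow> z > 0 \<Longrightarrow> m \<ge> 0 \<Longrightarrow> FF z0 z m \<ge> 0"
  unfolding FF_def by (intro diff_ge_0_iff_ge[THEN iffD2] divide_left_mono) (auto simp: algebra_simps intro!: mult_pos_pos add_pos_nonneg)

lemma abs_G: "(a::real) > 0 \<Longrightarrow> z > 0 \<Longrightarrow> (1/a - 1/(a+z)) - (1/(a+z) - 1/(a+z+z)) = 2*z^2/(a*(a+z)*(a+z+z))"
proof -
  assume h: "(a::real) > 0" "z > 0"
  have n: "a+z \<noteq> 0" "a+z+z \<noteq> 0" "a \<noteq> 0" using h by auto
  have e1: "1/a - 1/(a+z) = z/(a*(a+z))" using n by (simp add: field_simps)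
  have e2: "1/(a+z) - 1/(a+z+z) = z/((a+z)*(a+z+z))" using n by (simp add: field_simps)
  have e3: "z/(a*(a+z)) = z*(a+z+z)/(a*(a+z)*(a+z+z))" using n by simp
  have e4: "z/((a+z)*(a+z+z)) = z*a/(a*(a+z)*(a+z+z))" using n by simp
  have e5: "z*(a+z+z) - z*a = 2*z^2" by (simp add: algebra_simps power2_eq_square)
  show ?thesis unfolding e1 e2 e3 e4 diff_divide_distrib[symmetric] e5 ..
qed

lemma abs_F: "(a::real) > 0 \<Longrightarrow> z > 0 \<Longrightarrow> 1/(a+z) - 1/(a+z+z) = z/((a+z)*(a+z+z))"
proof -
  assume h: "(a::real) > 0" "z > 0"
  have "a+z \<noteq> 0" "a+z+z \<noteq> 0" "a \<noteq> 0" using h by auto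
  thus ?thesis by (simp add: field_simps)
qed

lemma abs_key: "(a::real) > 0 \<Longrightarrow> z > 0 \<Longrightarrow> a < 2*m*z \<Longrightarrow> z/((a+z)*(a+z+z)) < m * (2*z^2/(a*(a+z)*(a+z+z)))"
proof -
  assume h: "a > 0" "z > 0" "a < 2*m*z"
  have "a \<noteq> 0" using h by auto
  hence "z/((a+z)*(a+z+z)) = (z*a)/(a*(a+z)*(a+z+z))" by simp
  also have "... < (2*m*z*z)/(a*(a+z)*(a+z+z))" using h by (intro divide_strict_right_mono) auto
  also have "... = m * (2*z^2/(a*(a+z)*(a+z+z)))" by (simp add: power2_eq_square)
  finally show ?thesis .
qed

lemma FF_shift: "FF z0 z (k - 1) - FF z0 z k = (1/a - 1/(a+z)) - (1/(a+z) - 1/(a+z+z))"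
  if "a = z0 + (k-1)*z" for a
  unfolding FF_def that by (simp add: algebra_simps)

lemma GG_closed: "z0 > 0 \<Longrightarrow> z > 0 \<Longrightarrow> k \<ge> 1 \<Longrightarrow>
  FF z0 z (k - 1) - FF z0 z k = 2*z^2 / ((z0 + (k-1)*z) * (z0 + (k-1)*z + z) * (z0 + (k-1)*z + z + z))"
  using abs_G[of "z0 + (k-1)*z" z] FF_shift[of "z0 + (k-1)*z" z0 k z] by (simp add: add_pos_nonneg)

lemma GG_mono: "z0 > 0 \<Longrightarrow> z > 0 \<Longrightarrow> 1 \<le> k \<Longrightarrow> k \<le> m \<Longrightarrow>
  FF z0 z (m - 1) - FF z0 z m \<le> FF z0 z (k - 1) - FF z0 z k"
proof -
  assume a: "z0 > 0" "z > 0" "1 \<le> k" "k \<le> m"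
  define A where "A = z0 + (k-1)*z"
  define B where "B = z0 + (m-1)*z"
  have p: "A > 0" "A \<le> B" using a by (auto simp: A_def B_def intro: add_pos_nonneg mult_right_mono)
  have d: "A * (A+z) * (A+z+z) \<le> B * (B+z) * (B+z+z)"
    using p a by (intro mult_mono) (auto intro: mult_nonneg_nonneg)
  have "0 < A * (A+z) * (A+z+z)" using p a by simp
  hence "2*z^2 / (B * (B+z) * (B+z+z)) \<le> 2*z^2 / (A * (A+z) * (A+z+z))"
    using d a by (intro divide_left_mono) auto
  thus ?thesis using GG_closed[OF a(1,2)] a unfolding A_def B_def by simp
qed

lemma key: "z0 > 0 \<Longrightarrow> z > 0 \<Longrightarrow> m \<ge> 1 \<Longrightarrow> z > z0 / (1 + m) \<Longrightarrow>
  m * (FF z0 z (m - 1) - FF z0 z m) > FF z0 z m"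
proof -
  assume a: "z0 > 0" "z > 0" "m \<ge> 1" "z > z0 / (1 + m)"
  define A where "A = z0 + (m-1)*z"
  have p: "A > 0" using a by (auto simp: A_def intro: add_pos_nonneg)
  have c: "z0 < (1+m)*z" using a(4) a(3) by (simp add: field_simps)
  have "2*m*z > A" using c by (simp add: algebra_simps A_def)
  hence "z/((A+z)*(A+z+z)) < m * (2*z^2/(A*(A+z)*(A+z+z)))" using abs_key p a by blast
  moreover have "FF z0 z m = z/((A+z)*(A+z+z))"
    using abs_F[OF p a(2)] unfolding FF_def A_def by (simp add: algebra_simps)
  ultimately show ?thesis using GG_closed[OF a(1,2,3)] unfolding A_def by simp
qed

theorem proposition1:
  fixes N :: "'a set" and G :: "'a \<Rightarrow> 'a \<Rightarrow> bool"
    and z0 \<gamma> z :: real and M :: "'a set" and p :: "'a \<Rightarrow> real"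
  assumes "finite N"
    and "\<And>i j. G i j \<Longrightarrow> G j i"
    and "\<And>i. \<not> G i i"
    and "\<And>i j. G i j \<Longrightarrow> i \<in> N \<and> j \<in> N"
    and "z0 > 0" and "\<gamma> > 0"
    and "is_contract N M z p"
    and "\<not> independent_set G M"
    and "z > Min ((\<lambda>i. z0 / (1 + real (mcnt N G M i))) ` M)"
  shows "\<not> optimal z0 \<gamma> N G M z p"
proof
  assume opt: "optimal z0 \<gamma> N G M z p"
  define m where "m = mcnt N G M"
  have MN: "M \<subseteq> N" and zp: "z > 0" using assms(7) unfolding is_contract_def by auto
  have fM: "finite M" using MN assms(1) finite_subset by blast
  have fnb: "\<And>j. finite (nbrs N G j)" using assms(1) unfolding nbrs_def by auto
  obtain a b where ab: "a \<in> M" "b \<in> M" "G a b" using assms(8) unfolding independent_set_def by blast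
  have Mne: "M \<noteq> {}" using ab by auto
  have "Max (m ` M) \<in> m ` M" using fM Mne by simp
  then obtain i where iM: "i \<in> M" and imax: "m i = Max (m ` M)" by force
  have mle: "\<And>k. k \<in> M \<Longrightarrow> m k \<le> m i" using imax fM by simp
  have "b \<in> nbrs N G a \<inter> M" using ab assms(3,4) unfolding nbrs_def by (metis (mono_tags, lifting) IntI mem_Collect_eq)
  hence "m a \<ge> 1" unfolding m_def mcnt_def using fnb
    by (metis One_nat_def Suc_leI card_gt_0_iff empty_iff finite_Int)
  hence mi1: "m i \<ge> 1" using mle ab(1) by fastforce
  have "z0 / (1 + real (m i)) \<le> Min ((\<lambda>i. z0 / (1 + real (mcnt N G M i))) ` M)"
  proof (rule Min.boundedI)
    show "finite ((\<lambda>i. z0 / (1 + real (mcnt N G M i))) ` M)" using fM by simp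
    show "(\<lambda>i. z0 / (1 + real (mcnt N G M i))) ` M \<noteq> {}" using Mne by simp
    fix x assume "x \<in> (\<lambda>i. z0 / (1 + real (mcnt N G M i))) ` M"
    then obtain k where k: "k \<in> M" "x = z0 / (1 + real (m k))" unfolding m_def by auto
    have "real (m k) \<le> real (m i)" using mle[OF k(1)] by simp
    thus "z0 / (1 + real (m i)) \<le> x" unfolding k(2) using assms(5)
      by (intro divide_left_mono) auto
  qed
  hence zgt: "z > z0 / (1 + real (m i))" using assms(9) by linarith
  define M' where "M' = M - {i}"
  define p' where "p' = (\<lambda>j. FF z0 z (real (mcnt N G M' j)))"
  have feas': "feasible z0 N G M' z p'"
    unfolding feasible_def is_contract_def p'_def FF_def[symmetric]
    using MN zp assms(5) FF_nonneg M'_def by auto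
  have feas: "feasible z0 N G M z p" using opt unfolding optimal_def by blast
  have le: "profit \<gamma> M' z p' \<le> profit \<gamma> M z p" using opt feas' unfolding optimal_def by blast
  define A where "A = nbrs N G i \<inter> M"
  have AM': "A \<subseteq> M'" unfolding A_def M'_def nbrs_def by auto
  have cardA: "card A = m i" unfolding A_def m_def mcnt_def ..
  have fM': "finite M'" using fM M'_def by simp
  have inA: "mcnt N G M' j = m j - 1 \<and> m j \<ge> 1" if "j \<in> A" for j
  proof -
    have "G i j" "j \<in> N" "j \<noteq> i" using that unfolding A_def nbrs_def by auto
    hence "i \<in> nbrs N G j \<inter> M" using assms(2,4) iM unfolding nbrs_def by auto
    moreover have "nbrs N G j \<inter> M' = (nbrs N G j \<inter> M) - {i}" unfolding M'_def by auto
    ultimately show ?thesis unfolding m_def mcnt_def using fnb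
      by (metis One_nat_def Suc_leI card_Diff_singleton card_gt_0_iff empty_iff finite_Int)
  qed
  have notA: "mcnt N G M' j = m j" if "j \<in> M'" "j \<notin> A" for j
  proof -
    have "i \<notin> nbrs N G j"
    proof
      assume "i \<in> nbrs N G j"
      hence "G i j" "j \<noteq> i" using assms(2) unfolding nbrs_def by auto
      hence "j \<in> A" using assms(4) that(1) unfolding A_def nbrs_def M'_def by auto
      thus False using that by simp
    qed
    hence "nbrs N G j \<inter> M' = nbrs N G j \<inter> M" unfolding M'_def by auto
    thus ?thesis unfolding m_def mcnt_def by simp
  qed
  define F where "F = FF z0 z"
  define g where "g = F (real (m i) - 1) - F (real (m i))"
  define d where "d = (\<lambda>j. F (real (mcnt N G M' j)) - F (real (m j)))"
  have dA: "d j \<ge> g" if "j \<in> A" for j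
  proof -
    have "m j \<le> m i" using mle that AM' M'_def by auto
    moreover have "real (mcnt N G M' j) = real (m j) - 1" using inA[OF that] by simp
    ultimately show ?thesis unfolding d_def g_def F_def using inA[OF that] GG_mono[OF assms(5) zp] by simp
  qed
  have "(\<Sum>j\<in>M'. d j) = (\<Sum>j\<in>A. d j) + (\<Sum>j\<in>M'-A. d j)"
    using sum.subset_diff[OF AM' fM'] by (simp add: add.commute)
  also have "(\<Sum>j\<in>M'-A. d j) = 0" using notA unfolding d_def by (intro sum.neutral) auto
  finally have "(\<Sum>j\<in>M'. d j) \<ge> (\<Sum>j\<in>A. g)" using sum_mono[of A "\<lambda>_. g" d] dA by simp
  moreover have "(\<Sum>j\<in>A. g) = real (m i) * g" using cardA by simp
  moreover have "real (m i) * g > F (real (m i))" unfolding g_def F_def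
    using key[OF assms(5) zp _ zgt] mi1 by simp
  ultimately have gain: "(\<Sum>j\<in>M'. d j) > F (real (m i))" by linarith
  have "(\<Sum>j\<in>M. p j) \<le> (\<Sum>j\<in>M. F (real (m j)))"
    using feas unfolding feasible_def F_def FF_def m_def by (intro sum_mono) auto
  also have "... = F (real (m i)) + (\<Sum>j\<in>M'. F (real (m j)))"
    unfolding M'_def using sum.remove[OF fM iM] by simp
  also have "... < (\<Sum>j\<in>M'. F (real (m j))) + (\<Sum>j\<in>M'. d j)" using gain by simp
  also have "... = (\<Sum>j\<in>M'. p' j)" unfolding d_def p'_def F_def sum.distrib[symmetric] by simp
  finally have "profit \<gamma> M z p < profit \<gamma> M' z p'" unfolding profit_def by simp
  thus False using le by simp
qed

end
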